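(* Let $I\subseteq\mathbb{R}$ be an interval and let $f,g: I\to\mathbb{R}$ be twice continuously differentiable with $g''(t)>0$ for all $t\in I$. For $n\ge 2$, positive weights $p_1,\dots,p_n$ with $\sum_{i=1}^n p_i=1$, and points $x_1,\dots,x_n\in I$ not all equal, put $$\Lambda_{f,g}(p,x)=\frac{\sum_{i=1}^n p_i f(x_i)-f\left(\sum_{i=1}^n p_i x_i\right)}{\sum_{i=1}^n p_i g(x_i)-g\left(\sum_{i=1}^n p_i x_i\right)}.$$ Then the inequality $\min\{x_1,\dots,x_n\}\le \Lambda_{f,g}(p,x)\le \max\{x_1,\dots,x_n\}$ holds for every $n\ge 2$, every such positive weight sequence $p$ and every such $x_1,\dots,x_n\in I$ (not all equal) if and only if $f''(t)=t\,g''(t)$ for every $t\in I$.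
   Context: Since $g''>0$, $g$ is strictly convex on $I$, so the denominator (a Jensen functional of $g$) is strictly positive when the $x_i$ are not all equal. *)

theory Defs
  imports "HOL-Analysis.Analysis"
begin

definition Lambda :: "(real \<Rightarrow> real) \<Rightarrow> (real \<Rightarrow> real) \<Rightarrow> nat \<Rightarrow> (nat \<Rightarrow> real) \<Rightarrow> (nat \<Rightarrow> real) \<Rightarrow> real" where
  "Lambda f g n p x =
     ((\<Sum>i<n. p i * f (x i)) - f (\<Sum>i<n. p i * x i)) /
     ((\<Sum>i<n. p i * g (x i)) - g (\<Sum>i<n. p i * x i))"

end

theory Submission
  imports Defs
begin


lemma ivl_sub: assumes "is_interval (S::real set)" "a \<in> S" "b \<in> S" shows "{a..b} \<subseteq> S"
proof
  fix x assume "x \<in> {a..b}"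
  then have "a \<le> x" "x \<le> b" by auto
  then show "x \<in> S" using assms(1)[unfolded is_interval_1] assms(2,3) by blast
qed

lemma incr_within:
  fixes h h' :: "real \<Rightarrow> real" and S :: "real set"
  assumes S: "is_interval S"
    and d: "\<And>t. t \<in> S \<Longrightarrow> (h has_real_derivative h' t) (at t within S)"
    and ab: "a \<le> b" "a \<in> S" "b \<in> S"
    and nn: "\<And>t. a < t \<Longrightarrow> t < b \<Longrightarrow> h' t \<ge> 0"
  shows "h a \<le> h b"
proof (rule DERIV_nonneg_imp_increasing_open[OF ab(1)])
  have sub: "{a..b} \<subseteq> S" using ivl_sub[OF S ab(2,3)] .
  fix x assume x: "a < x" "x < b"
  have "{a<..<b} \<subseteq> interior S" using sub by (intro interior_maximal) auto
  with x have "x \<in> interior S" by auto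
  moreover have "x \<in> S" using x sub by auto
  ultimately have "(h has_real_derivative h' x) (at x)" using d[of x] at_within_interior by metis
  then show "\<exists>y. (h has_real_derivative y) (at x) \<and> 0 \<le> y" using nn x by blast
next
  have sub: "{a..b} \<subseteq> S" using ivl_sub[OF S ab(2,3)] .
  have "continuous_on S h"
    using d by (meson DERIV_continuous continuous_on_eq_continuous_within)
  then show "continuous_on {a..b} h" using sub continuous_on_subset by blast
qed

lemma tangent_within:
  fixes h h' h'' :: "real \<Rightarrow> real" and S :: "real set"
  assumes S: "is_interval S"
    and d1: "\<And>t. t \<in> S \<Longrightarrow> (h has_real_derivative h' t) (at t within S)"
    and d2: "\<And>t. t \<in> S \<Longrightarrow> (h' has_real_derivative h'' t) (at t within S)"
    and nn: "\<And>t. t \<in> S \<Longrightarrow> h'' t \<ge> 0"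
    and m: "m \<in> S" and y: "y \<in> S"
  shows "h y \<ge> h m + h' m * (y - m)"
proof -
  have mono: "h' u \<le> h' v" if "u \<le> v" "u \<in> S" "v \<in> S" for u v
    by (rule incr_within[where h=h' and h'=h'', OF S d2 that]) (use nn ivl_sub[OF S that(2,3)] in \<open>auto intro!: nn\<close>)
  define G where "G t = h t - h' m * t" for t
  have dG: "(G has_real_derivative (h' t - h' m)) (at t within S)" if "t \<in> S" for t
    unfolding G_def by (rule derivative_eq_intros d1 that refl | simp)+
  show ?thesis
  proof (cases "m \<le> y")
    case True
    have "G m \<le> G y"
    proof (rule incr_within[OF S dG True m y])
      fix t assume "m < t" "t < y"
      moreover have "t \<in> S" using ivl_sub[OF S m y] calculation by auto
      ultimately show "0 \<le> h' t - h' m" using mono[of m t] m by auto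
    qed
    then show ?thesis unfolding G_def by (simp add: algebra_simps)
  next
    case False
    have dG': "((\<lambda>t. - G t) has_real_derivative - (h' t - h' m)) (at t within S)" if "t \<in> S" for t
      by (rule derivative_eq_intros dG that refl)+
    have "- G y \<le> - G m"
    proof (rule incr_within[OF S dG'])
      show "y \<le> m" using False by simp
      fix t assume "y < t" "t < m"
      moreover have "t \<in> S" using ivl_sub[OF S y m] calculation by auto
      ultimately show "0 \<le> - (h' t - h' m)" using mono[of t m] m by auto
    qed (use m y in auto)
    then show ?thesis unfolding G_def by (simp add: algebra_simps)
  qed
qed

lemma tangent_quad:
  fixes h h' h'' :: "real \<Rightarrow> real" and S :: "real set"
  assumes S: "is_interval S"
    and d1: "\<And>t. t \<in> S \<Longrightarrow> (h has_real_derivative h' t) (at t within S)"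
    and d2: "\<And>t. t \<in> S \<Longrightarrow> (h' has_real_derivative h'' t) (at t within S)"
    and nn: "\<And>t. t \<in> S \<Longrightarrow> h'' t \<ge> c"
    and m: "m \<in> S" and y: "y \<in> S"
  shows "h y \<ge> h m + h' m * (y - m) + c / 2 * (y - m)^2"
proof -
  have e1: "((\<lambda>t. h t - c / 2 * (t - m)^2) has_real_derivative (h' t - c * (t - m))) (at t within S)"
    if "t \<in> S" for t
    by (rule derivative_eq_intros d1 that refl | simp)+
  have e2: "((\<lambda>t. h' t - c * (t - m)) has_real_derivative (h'' t - c)) (at t within S)"
    if "t \<in> S" for t
    by (rule derivative_eq_intros d2 that refl | simp)+
  have "h y - c / 2 * (y - m)^2 \<ge> (h m - c / 2 * (m - m)^2) + (h' m - c * (m - m)) * (y - m)"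
    by (rule tangent_within[OF S e1 e2 _ m y]) (use nn in auto)
  then show ?thesis by simp
qed

lemma jensen_quad:
  fixes h h' h'' :: "real \<Rightarrow> real" and S :: "real set" and p x :: "'i \<Rightarrow> real"
  assumes S: "is_interval S"
    and d1: "\<And>t. t \<in> S \<Longrightarrow> (h has_real_derivative h' t) (at t within S)"
    and d2: "\<And>t. t \<in> S \<Longrightarrow> (h' has_real_derivative h'' t) (at t within S)"
    and nn: "\<And>t. t \<in> S \<Longrightarrow> h'' t \<ge> c"
    and A: "finite A" and p: "\<And>i. i \<in> A \<Longrightarrow> p i \<ge> 0" and p1: "(\<Sum>i\<in>A. p i) = 1"
    and x: "\<And>i. i \<in> A \<Longrightarrow> x i \<in> S"
  shows "(\<Sum>i\<in>A. p i * h (x i)) - h (\<Sum>i\<in>A. p i * x i)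
           \<ge> c / 2 * (\<Sum>i\<in>A. p i * (x i - (\<Sum>j\<in>A. p j * x j))^2)"
proof -
  define \<mu> where "\<mu> = (\<Sum>j\<in>A. p j * x j)"
  have "(\<Sum>j\<in>A. p j *\<^sub>R x j) \<in> S"
    by (rule convex_sum[OF A is_interval_convex[OF S] p1 p x])
  then have mu: "\<mu> \<in> S" unfolding \<mu>_def by simp
  have "(\<Sum>i\<in>A. p i * (h \<mu> + h' \<mu> * (x i - \<mu>) + c / 2 * (x i - \<mu>)^2)) \<le> (\<Sum>i\<in>A. p i * h (x i))"
    by (rule sum_mono, rule mult_left_mono[OF tangent_quad[OF S d1 d2 nn mu x] p]) auto
  moreover have "(\<Sum>i\<in>A. p i * (h \<mu> + h' \<mu> * (x i - \<mu>) + c / 2 * (x i - \<mu>)^2))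
      = h \<mu> * (\<Sum>i\<in>A. p i) + h' \<mu> * ((\<Sum>i\<in>A. p i * x i) - \<mu> * (\<Sum>i\<in>A. p i))
        + c / 2 * (\<Sum>i\<in>A. p i * (x i - \<mu>)^2)"
    by (simp add: algebra_simps sum.distrib sum_distrib_left sum_subtractf)
  ultimately show ?thesis using p1 unfolding \<mu>_def[symmetric] by simp
qed

lemma pos_jensen:
  fixes h h' h'' :: "real \<Rightarrow> real" and S :: "real set" and p x :: "'i \<Rightarrow> real"
  assumes S: "is_interval S" "compact S"
    and d1: "\<And>t. t \<in> S \<Longrightarrow> (h has_real_derivative h' t) (at t within S)"
    and d2: "\<And>t. t \<in> S \<Longrightarrow> (h' has_real_derivative h'' t) (at t within S)"
    and hc: "continuous_on S h''"
    and pos: "\<And>t. t \<in> S \<Longrightarrow> h'' t > 0"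
    and A: "finite A" and p: "\<And>i. i \<in> A \<Longrightarrow> p i > 0" and p1: "(\<Sum>i\<in>A. p i) = 1"
    and x: "\<And>i. i \<in> A \<Longrightarrow> x i \<in> S"
    and ne: "i \<in> A" "j \<in> A" "x i \<noteq> x j"
  shows "(\<Sum>i\<in>A. p i * h (x i)) - h (\<Sum>i\<in>A. p i * x i) > 0"
proof -
  have "S \<noteq> {}" using x ne by auto
  then obtain t0 where t0: "t0 \<in> S" "\<And>y. y \<in> S \<Longrightarrow> h'' t0 \<le> h'' y"
    using continuous_attains_inf[OF S(2) _ hc] by blast
  define c where "c = h'' t0"
  have c: "c > 0" using pos t0 unfolding c_def by auto
  define \<mu> where "\<mu> = (\<Sum>j\<in>A. p j * x j)"
  have J: "(\<Sum>i\<in>A. p i * h (x i)) - h \<mu> \<ge> c / 2 * (\<Sum>i\<in>A. p i * (x i - \<mu>)^2)"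
    unfolding \<mu>_def
    by (rule jensen_quad[OF S(1) d1 d2 _ A _ p1 x]) (use t0 p in \<open>auto simp: c_def less_imp_le\<close>)
  obtain k where k: "k \<in> A" "x k \<noteq> \<mu>" using ne by metis
  have "(\<Sum>i\<in>A. p i * (x i - \<mu>)^2) > 0"
  proof (rule sum_pos2[OF A k(1)])
    show "0 < p k * (x k - \<mu>)^2" using p[OF k(1)] k(2) by simp
    show "0 \<le> p i * (x i - \<mu>)^2" if "i \<in> A" for i using p[OF that] by simp
  qed
  with c have "c / 2 * (\<Sum>i\<in>A. p i * (x i - \<mu>)^2) > 0" by simp
  with J show ?thesis unfolding \<mu>_def by linarith
qed

lemma find_ab:
  fixes I :: "real set" and F G :: "real \<Rightarrow> real"
  assumes I: "is_interval I" and nt: "\<exists>a\<in>I. \<exists>b\<in>I. a < b"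
    and t0: "t0 \<in> I" and Fc: "continuous_on I F" and Gc: "continuous_on I G"
    and Gp: "\<And>t. t \<in> I \<Longrightarrow> G t > 0" and F0: "F t0 > 0"
  shows "\<exists>a b. a < b \<and> a \<in> I \<and> b \<in> I \<and> (\<forall>t\<in>{a..b}. \<forall>s\<in>{a..b}. F t - \<bar>s - t\<bar> * G t > 0)"
proof -
  have cF: "\<forall>e>0. \<exists>d>0. \<forall>x'\<in>I. dist x' t0 < d \<longrightarrow> dist (F x') (F t0) < e"
    using bspec[OF Fc[unfolded continuous_on_iff] t0] .
  have cG: "\<forall>e>0. \<exists>d>0. \<forall>x'\<in>I. dist x' t0 < d \<longrightarrow> dist (G x') (G t0) < e"
    using bspec[OF Gc[unfolded continuous_on_iff] t0] .
  have "F t0 / 2 > 0" using F0 by simp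
  then obtain d1 where d1': "d1 > 0" "\<forall>x'\<in>I. dist x' t0 < d1 \<longrightarrow> dist (F x') (F t0) < F t0 / 2"
    using cF by blast
  have d1: "dist (F y) (F t0) < F t0 / 2" if "y \<in> I" "dist y t0 < d1" for y
    using d1'(2) that by blast
  obtain d2 where d2': "d2 > 0" "\<forall>x'\<in>I. dist x' t0 < d2 \<longrightarrow> dist (G x') (G t0) < 1"
    using cG zero_less_one by blast
  have d2: "dist (G y) (G t0) < 1" if "y \<in> I" "dist y t0 < d2" for y
    using d2'(2) that by blast
  define K where "K = G t0 + 1"
  have K: "K > 0" using Gp[OF t0] unfolding K_def by simp
  define e where "e = min (min d1 d2) (F t0 / (2 * K))"
  have e: "e > 0" using d1'(1) d2'(1) K F0 unfolding e_def by simp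
  obtain a0 b0 where ab0: "a0 \<in> I" "b0 \<in> I" "a0 < b0" using nt by blast
  obtain a b where ab: "a < b" "a \<in> I" "b \<in> I" "t0 \<in> {a..b}" "b - a < e"
  proof (cases "t0 < b0")
    case True
    let ?b = "min b0 (t0 + e / 2)"
    have "?b \<in> I" using ivl_sub[OF I t0 ab0(2)] True e by auto
    then show ?thesis using that[of t0 ?b] True e t0 by auto
  next
    case False
    let ?a = "max a0 (t0 - e / 2)"
    have "?a \<in> I" using ivl_sub[OF I ab0(1) t0] False ab0 e by auto
    then show ?thesis using that[of ?a t0] False e t0 ab0 by auto
  qed
  have e1: "e \<le> d1" "e \<le> d2" "e \<le> F t0 / (2 * K)" unfolding e_def by auto
  have "\<forall>t\<in>{a..b}. \<forall>s\<in>{a..b}. F t - \<bar>s - t\<bar> * G t > 0"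
  proof (intro ballI)
    fix t s assume t: "t \<in> {a..b}" and s: "s \<in> {a..b}"
    have tI: "t \<in> I" using ivl_sub[OF I ab(2,3)] t by auto
    have dt: "dist t t0 \<le> b - a" using t ab(4) by (auto simp: dist_real_def)
    have "dist t t0 < d1" using dt ab(5) e1(1) by linarith
    then have "dist (F t) (F t0) < F t0 / 2" by (rule d1[OF tI])
    then have "\<bar>F t - F t0\<bar> < F t0 / 2" by (simp only: dist_real_def)
    then have Ft: "F t > F t0 / 2" by (simp only: abs_less_iff) linarith
    have "dist t t0 < d2" using dt ab(5) e1(2) by linarith
    then have "dist (G t) (G t0) < 1" by (rule d2[OF tI])
    then have "\<bar>G t - G t0\<bar> < 1" by (simp only: dist_real_def)
    then have Gt: "G t \<le> K" unfolding K_def by (simp only: abs_less_iff) linarith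
    have st: "\<bar>s - t\<bar> \<le> b - a" using s t by auto
    have "\<bar>s - t\<bar> * G t \<le> \<bar>s - t\<bar> * K" using Gt by (simp add: mult_left_mono)
    also have "\<dots> \<le> (b - a) * K" using st K by (simp add: mult_right_mono)
    also have "\<dots> < F t0 / (2 * K) * K" using ab(5) e1(3) K by (intro mult_strict_right_mono) auto
    also have "\<dots> = F t0 / 2" using K by simp
    finally show "F t - \<bar>s - t\<bar> * G t > 0" using Ft by linarith
  qed
  then show ?thesis using ab by blast
qed


lemma deriv_sub:
  assumes "\<And>t. t \<in> I \<Longrightarrow> (f has_real_derivative f' t) (at t within I)" "S \<subseteq> I" "t \<in> S"
  shows "(f has_real_derivative f' t) (at t within S)"
  using assms by (meson has_field_derivative_subset subsetD)

lemma two_point: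
  fixes I :: "real set" and f g f' g' f'' g'' :: "real \<Rightarrow> real"
  assumes I: "is_interval I"
    and f1: "\<And>t. t \<in> I \<Longrightarrow> (f has_real_derivative f' t) (at t within I)"
    and f2: "\<And>t. t \<in> I \<Longrightarrow> (f' has_real_derivative f'' t) (at t within I)"
    and f2c: "continuous_on I f''"
    and g1: "\<And>t. t \<in> I \<Longrightarrow> (g has_real_derivative g' t) (at t within I)"
    and g2: "\<And>t. t \<in> I \<Longrightarrow> (g' has_real_derivative g'' t) (at t within I)"
    and g2c: "continuous_on I g''"
    and g2pos: "\<And>t. t \<in> I \<Longrightarrow> g'' t > 0"
    and ab: "a < b" "a \<in> I" "b \<in> I"
    and pos: "\<And>t. t \<in> {a..b} \<Longrightarrow> f'' t - k * g'' t > 0"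
  shows "Lambda f g 2 (\<lambda>_. 1/2) (\<lambda>i. if i = 0 then a else b) > k"
proof -
  define S where "S = {a..b}"
  have SI: "S \<subseteq> I" unfolding S_def using ivl_sub[OF I ab(2,3)] .
  have S: "is_interval S" "compact S" unfolding S_def by (simp_all add: is_interval_cc)
  let ?p = "\<lambda>_::nat. 1/2::real" and ?x = "\<lambda>i::nat. if i = 0 then a else b"
  have A: "finite {..<2::nat}" by simp
  have p1: "(\<Sum>i<2::nat. ?p i) = 1" by simp
  have xS: "?x i \<in> S" for i using ab unfolding S_def by auto
  have ne: "(0::nat) \<in> {..<2}" "(1::nat) \<in> {..<2}" "?x 0 \<noteq> ?x 1" using ab by auto
  have d1: "((\<lambda>t. f t - k * g t) has_real_derivative (f' t - k * g' t)) (at t within S)" if "t \<in> S" for t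
    using deriv_sub[OF f1 SI that] deriv_sub[OF g1 SI that] by (auto intro!: derivative_eq_intros)
  have d2: "((\<lambda>t. f' t - k * g' t) has_real_derivative (f'' t - k * g'' t)) (at t within S)" if "t \<in> S" for t
    using deriv_sub[OF f2 SI that] deriv_sub[OF g2 SI that] by (auto intro!: derivative_eq_intros)
  have hc: "continuous_on S (\<lambda>t. f'' t - k * g'' t)"
    using SI f2c g2c by (intro continuous_intros) (auto intro: continuous_on_subset)
  have N: "(\<Sum>i<2. ?p i * (f (?x i) - k * g (?x i))) - (f (\<Sum>i<2. ?p i * ?x i) - k * g (\<Sum>i<2. ?p i * ?x i)) > 0"
  proof (rule pos_jensen[OF S d1 d2 hc _ A _ p1 xS ne])
    show "0 < f'' t - k * g'' t" if "t \<in> S" for t using pos that unfolding S_def by blast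
    show "0 < (1/2::real)" for i :: nat by simp
  qed
  have D: "(\<Sum>i<2. ?p i * g (?x i)) - g (\<Sum>i<2. ?p i * ?x i) > 0"
    by (rule pos_jensen[OF S _ _ _ _ A _ p1 xS ne, where h'=g' and h''=g''])
       (use SI g2pos in \<open>auto intro: deriv_sub[OF g1] deriv_sub[OF g2] continuous_on_subset[OF g2c]\<close>)
  have eq: "(\<Sum>i<2. ?p i * (f (?x i) - k * g (?x i))) - (f (\<Sum>i<2. ?p i * ?x i) - k * g (\<Sum>i<2. ?p i * ?x i))
     = ((\<Sum>i<2. ?p i * f (?x i)) - f (\<Sum>i<2. ?p i * ?x i)) - k * ((\<Sum>i<2. ?p i * g (?x i)) - g (\<Sum>i<2. ?p i * ?x i))"
    by (simp add: algebra_simps sum_subtractf sum_distrib_left)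
  show ?thesis using N D unfolding eq Lambda_def by (simp add: less_divide_eq)
qed


theorem theorem2:
  fixes I :: "real set" and f g f' g' f'' g'' :: "real \<Rightarrow> real"
  assumes I_interval: "is_interval I"
    and I_nontrivial: "\<exists>a\<in>I. \<exists>b\<in>I. a < b"
    and f1: "\<And>t. t \<in> I \<Longrightarrow> (f has_real_derivative f' t) (at t within I)"
    and f2: "\<And>t. t \<in> I \<Longrightarrow> (f' has_real_derivative f'' t) (at t within I)"
    and f2c: "continuous_on I f''"
    and g1: "\<And>t. t \<in> I \<Longrightarrow> (g has_real_derivative g' t) (at t within I)"
    and g2: "\<And>t. t \<in> I \<Longrightarrow> (g' has_real_derivative g'' t) (at t within I)"
    and g2c: "continuous_on I g''"
    and g2pos: "\<And>t. t \<in> I \<Longrightarrow> g'' t > 0"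
  shows "(\<forall>n\<ge>2. \<forall>p x. (\<forall>i<n. p i > 0) \<and> (\<Sum>i<n. p i) = 1 \<and> (\<forall>i<n. x i \<in> I)
            \<and> (\<exists>i<n. \<exists>j<n. x i \<noteq> x j) \<longrightarrow>
              Min (x ` {..<n}) \<le> Lambda f g n p x \<and> Lambda f g n p x \<le> Max (x ` {..<n}))
         \<longleftrightarrow> (\<forall>t\<in>I. f'' t = t * g'' t)"
  proof
  assume P: "\<forall>n\<ge>2. \<forall>p x. (\<forall>i<n. p i > 0) \<and> (\<Sum>i<n. p i) = 1 \<and> (\<forall>i<n. x i \<in> I)
            \<and> (\<exists>i<n. \<exists>j<n. x i \<noteq> x j) \<longrightarrow>
              Min (x ` {..<n}) \<le> Lambda f g n p x \<and> Lambda f g n p x \<le> Max (x ` {..<n})"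
  have inst: "Min {a, b} \<le> Lambda h g 2 (\<lambda>_. 1/2) (\<lambda>i. if i = 0 then a else b)
      \<and> Lambda h g 2 (\<lambda>_. 1/2) (\<lambda>i. if i = 0 then a else b) \<le> Max {a, b}"
    if "a < b" "a \<in> I" "b \<in> I" "h = f" for a b h
  proof -
    have img: "(\<lambda>i::nat. if i = 0 then a else b) ` {..<2} = {a, b}"
    proof -
      have "{..<2::nat} = {0, 1}" by (auto simp: numeral_2_eq_2)
      then show ?thesis by auto
    qed
    have "(\<forall>i<2::nat. (1/2::real) > 0) \<and> (\<Sum>i<2::nat. (1/2::real)) = 1 \<and> (\<forall>i<2::nat. (if i = 0 then a else b) \<in> I)
            \<and> (\<exists>i<2::nat. \<exists>j<2::nat. (if i = 0 then a else b) \<noteq> (if j = 0 then a else b))"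
    proof (intro conjI)
      show "\<exists>i<2::nat. \<exists>j<2::nat. (if i = 0 then a else b) \<noteq> (if j = 0 then a else b)"
        using that(1) by (intro exI[of _ "0::nat"] conjI exI[of _ "1::nat"]) auto
    qed (use that in auto)
    then show ?thesis using P[rule_format, of 2 "\<lambda>_. 1/2" "\<lambda>i. if i = 0 then a else b"] that(4)
      unfolding img by simp
  qed
  show "\<forall>t\<in>I. f'' t = t * g'' t"
  proof (rule ccontr)
    assume "\<not> (\<forall>t\<in>I. f'' t = t * g'' t)"
    then obtain t0 where t0: "t0 \<in> I" "f'' t0 \<noteq> t0 * g'' t0" by blast
    show False
    proof (cases "f'' t0 > t0 * g'' t0")
      case True
      have Fc: "continuous_on I (\<lambda>t. f'' t - t * g'' t)"
        using f2c g2c by (intro continuous_intros)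
      obtain a b where ab: "a < b" "a \<in> I" "b \<in> I"
        and F: "\<forall>t\<in>{a..b}. \<forall>s\<in>{a..b}. (f'' t - t * g'' t) - \<bar>s - t\<bar> * g'' t > 0"
        using find_ab[OF I_interval I_nontrivial t0(1) Fc g2c g2pos] True by auto
      have "Lambda f g 2 (\<lambda>_. 1/2) (\<lambda>i. if i = 0 then a else b) > b"
      proof (rule two_point[OF I_interval f1 f2 f2c g1 g2 g2c g2pos ab])
        fix t assume t: "t \<in> {a..b}"
        have bb: "b \<in> {a..b}" using ab by simp
        have "(f'' t - t * g'' t) - \<bar>b - t\<bar> * g'' t > 0" using F t bb by blast
        moreover have "\<bar>b - t\<bar> = b - t" using t by simp
        ultimately show "f'' t - b * g'' t > 0" by (simp add: algebra_simps)
      qed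
      moreover have "Max {a, b} = b" using ab(1) by simp
      ultimately show False using inst[OF ab refl] by linarith
    next
      case False
      have lt: "f'' t0 < t0 * g'' t0" using t0(2) False by linarith
      have lt': "0 < (\<lambda>t. t * g'' t - f'' t) t0" using lt by simp
      have Fc: "continuous_on I (\<lambda>t. t * g'' t - f'' t)"
        using f2c g2c by (intro continuous_intros)
      obtain a b where ab: "a < b" "a \<in> I" "b \<in> I"
        and F: "\<forall>t\<in>{a..b}. \<forall>s\<in>{a..b}. (t * g'' t - f'' t) - \<bar>s - t\<bar> * g'' t > 0"
        using find_ab[OF I_interval I_nontrivial t0(1) Fc g2c g2pos lt'] by blast
      have mf1: "((\<lambda>t. - f t) has_real_derivative - f' t) (at t within I)" if "t \<in> I" for t
        using DERIV_minus[OF f1[OF that]] .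
      have mf2: "((\<lambda>t. - f' t) has_real_derivative - f'' t) (at t within I)" if "t \<in> I" for t
        using DERIV_minus[OF f2[OF that]] .
      have mfc: "continuous_on I (\<lambda>t. - f'' t)" using f2c by (intro continuous_intros)
      have "Lambda (\<lambda>t. - f t) g 2 (\<lambda>_. 1/2) (\<lambda>i. if i = 0 then a else b) > - a"
      proof (rule two_point[OF I_interval mf1 mf2 mfc g1 g2 g2c g2pos ab])
        fix t assume t: "t \<in> {a..b}"
        have aa: "a \<in> {a..b}" using ab by simp
        have "(t * g'' t - f'' t) - \<bar>a - t\<bar> * g'' t > 0" using F t aa by blast
        moreover have "\<bar>a - t\<bar> = t - a" using t by simp
        ultimately show "- f'' t - (- a) * g'' t > 0" by (simp add: algebra_simps)
      qed
      moreover have "Lambda (\<lambda>t. - f t) g 2 (\<lambda>_. 1/2) (\<lambda>i. if i = 0 then a else b)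
          = - Lambda f g 2 (\<lambda>_. 1/2) (\<lambda>i. if i = 0 then a else b)"
        unfolding Lambda_def by (simp only: mult_minus_right sum_negf minus_minus diff_minus_eq_add) (simp add: minus_divide_left)
      ultimately have "Lambda f g 2 (\<lambda>_. 1/2) (\<lambda>i. if i = 0 then a else b) < a" by linarith
      moreover have "Min {a, b} = a" using ab(1) by simp
      ultimately show False using inst[OF ab refl] by linarith
    qed
  qed
next
  assume H: "\<forall>t\<in>I. f'' t = t * g'' t"
  show "\<forall>n\<ge>2. \<forall>p x. (\<forall>i<n. p i > 0) \<and> (\<Sum>i<n. p i) = 1 \<and> (\<forall>i<n. x i \<in> I)
            \<and> (\<exists>i<n. \<exists>j<n. x i \<noteq> x j) \<longrightarrow>
              Min (x ` {..<n}) \<le> Lambda f g n p x \<and> Lambda f g n p x \<le> Max (x ` {..<n})"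
  proof (intro allI impI)
    fix n :: nat and p x :: "nat \<Rightarrow> real"
    assume n: "n \<ge> 2"
      and hyp: "(\<forall>i<n. p i > 0) \<and> (\<Sum>i<n. p i) = 1 \<and> (\<forall>i<n. x i \<in> I) \<and> (\<exists>i<n. \<exists>j<n. x i \<noteq> x j)"
    then have p: "\<And>i. i \<in> {..<n} \<Longrightarrow> p i > 0" and p1: "(\<Sum>i<n. p i) = 1"
      and xI: "\<And>i. i \<in> {..<n} \<Longrightarrow> x i \<in> I" by auto
    from hyp obtain i j where ij: "i \<in> {..<n}" "j \<in> {..<n}" "x i \<noteq> x j" by auto
    define m where "m = Min (x ` {..<n})"
    define M where "M = Max (x ` {..<n})"
    have fin: "finite (x ` {..<n})" and nem: "x ` {..<n} \<noteq> {}" using ij by auto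
    have mI: "m \<in> I" using Min_in[OF fin nem] xI unfolding m_def by auto
    have MI: "M \<in> I" using Max_in[OF fin nem] xI unfolding M_def by auto
    define S where "S = {m..M}"
    have SI: "S \<subseteq> I" unfolding S_def using ivl_sub[OF I_interval mI MI] .
    have S: "is_interval S" "compact S" unfolding S_def by (simp_all add: is_interval_cc)
    have xS: "\<And>i. i \<in> {..<n} \<Longrightarrow> x i \<in> S"
      unfolding S_def m_def M_def using fin by auto
    have A: "finite {..<n}" by simp
    have pnn: "\<And>i. i \<in> {..<n} \<Longrightarrow> p i \<ge> 0" using p less_imp_le by blast
    define N where "N = (\<Sum>i<n. p i * f (x i)) - f (\<Sum>i<n. p i * x i)"
    define D where "D = (\<Sum>i<n. p i * g (x i)) - g (\<Sum>i<n. p i * x i)"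
    have D: "D > 0" unfolding D_def
      by (rule pos_jensen[OF S _ _ _ _ A p p1 xS ij, where h'=g' and h''=g''])
         (use SI g2pos in \<open>auto intro: deriv_sub[OF g1] deriv_sub[OF g2] continuous_on_subset[OF g2c]\<close>)
    have gen: "(\<Sum>i<n. p i * (a * f (x i) + b * g (x i))) - (a * f (\<Sum>i<n. p i * x i) + b * g (\<Sum>i<n. p i * x i)) \<ge> 0"
      if nn: "\<And>t. t \<in> S \<Longrightarrow> a * f'' t + b * g'' t \<ge> 0" for a b
    proof -
      have d1: "((\<lambda>t. a * f t + b * g t) has_real_derivative (a * f' t + b * g' t)) (at t within S)" if "t \<in> S" for t
        using deriv_sub[OF f1 SI that] deriv_sub[OF g1 SI that] by (auto intro!: derivative_eq_intros)
      have d2: "((\<lambda>t. a * f' t + b * g' t) has_real_derivative (a * f'' t + b * g'' t)) (at t within S)" if "t \<in> S" for t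
        using deriv_sub[OF f2 SI that] deriv_sub[OF g2 SI that] by (auto intro!: derivative_eq_intros)
      have "(\<Sum>i<n. p i * (a * f (x i) + b * g (x i))) - (a * f (\<Sum>i<n. p i * x i) + b * g (\<Sum>i<n. p i * x i))
          \<ge> 0 / 2 * (\<Sum>i<n. p i * (x i - (\<Sum>j<n. p j * x j))^2)"
        by (rule jensen_quad[OF S(1) d1 d2 nn A pnn p1 xS])
      then show ?thesis by simp
    qed
    have lin: "(\<Sum>i<n. p i * (a * f (x i) + b * g (x i))) - (a * f (\<Sum>i<n. p i * x i) + b * g (\<Sum>i<n. p i * x i))
        = a * N + b * D" for a b
      unfolding N_def D_def by (simp add: algebra_simps sum.distrib sum_distrib_left sum_subtractf)
    have "1 * N + (- m) * D \<ge> 0"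
    proof -
      have "1 * f'' t + (- m) * g'' t \<ge> 0" if "t \<in> S" for t
      proof -
        have "t \<ge> m" "g'' t > 0" using that SI g2pos unfolding S_def by auto
        moreover have "f'' t = t * g'' t" using H that SI by auto
        ultimately show ?thesis by (simp add: algebra_simps)
      qed
      then show ?thesis using gen[of 1 "- m"] unfolding lin by simp
    qed
    then have "m \<le> N / D" using D by (simp add: le_divide_eq)
    moreover have "(- 1) * N + M * D \<ge> 0"
    proof -
      have "(- 1) * f'' t + M * g'' t \<ge> 0" if "t \<in> S" for t
      proof -
        have "t \<le> M" "g'' t > 0" using that SI g2pos unfolding S_def by auto
        moreover have "f'' t = t * g'' t" using H that SI by auto
        ultimately show ?thesis by (simp add: algebra_simps)
      qed
      then show ?thesis using gen[of "- 1" M] unfolding lin by simp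
    qed
    then have "N / D \<le> M" using D by (simp add: divide_le_eq)
    ultimately show "Min (x ` {..<n}) \<le> Lambda f g n p x \<and> Lambda f g n p x \<le> Max (x ` {..<n})"
      unfolding m_def M_def N_def D_def Lambda_def by simp
  qed
qed

end
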